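(* Let $\lambda,\mu$ be weights. If $\mu\subset\lambda$ then $\mu\le\lambda$ in the Bruhat order. Moreover: (i) if $a\lambda$ is an oriented cup diagram then $a=\underline\alpha$ for a unique weight $\alpha$ with $\alpha\subset\lambda$; (ii) if $\lambda b$ is an oriented cap diagram then $b=\overline\beta$ for a unique weight $\beta$ with $\lambda\supset\beta$; (iii) if $a\lambda b$ is an oriented circle diagram then $a=\underline\alpha$ and $b=\overline\beta$ for unique weights $\alpha,\beta$ with $\alpha\subset\lambda\supset\beta$.
   Context: A number line carries vertices indexed by consecutive integers. A weight labels each vertex by $\circ,\times,\vee,\wedge$ such that outside a finite set no $\vee$ is left of an $\wedge$. The Bruhat order $\le$ is generated by declaring that interchanging a $\vee$ with an $\wedge$ to its right makes a weight bigger. $\lambda\sim\mu$ if $\mu$ is obtained from $\lambda$ by permuting $\vee$'s and $\wedge$'s. A cup diagram consists of finitely many non-crossing cups joining pairs of vertices and rays down to infinity; cap diagrams similarly with caps and upward rays; $c^*$ is the mirror image. $c\lambda$ is an oriented cup diagram if free vertices are labelled $\circ/\times$, each cup has one $\vee$ and one $\wedge$ end, ray vertices are $\vee/\wedge$, and no two rays are labelled $\vee,\wedge$ in that order left to right; $\lambda c$ for a cap diagram is oriented if $c^*\lambda$ is. Degree: number of clockwise cups/caps (left end labelled $\wedge$). An oriented circle diagram $a\lambda b$ has $a\lambda$, $\lambda b$ oriented. $\underline\lambda$ is the unique cup diagram with $\underline\lambda\lambda$ oriented of degree $0$; $\overline\lambda=(\underline\lambda)^*$. $\mu\subset\lambda$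 (also written $\lambda\supset\mu$) means $\mu\sim\lambda$ and $\underline\mu\lambda$ is an oriented cup diagram. *)

theory Defs
  imports Main
begin

text \<open>Vertex labels: Circ = circle, Cross = cross, Down = vee, Up = wedge.
  The number line is the set of all integers.\<close>
datatype vlabel = Circ | Cross | Down | Up

type_synonym wt = "int \<Rightarrow> vlabel"

definition weight :: "wt \<Rightarrow> bool" where
  "weight l \<longleftrightarrow> (\<exists>F. finite F \<and>
     (\<forall>i j. i \<notin> F \<longrightarrow> j \<notin> F \<longrightarrow> i < j \<longrightarrow> \<not> (l i = Down \<and> l j = Up)))"

definition bruhat_step :: "wt \<Rightarrow> wt \<Rightarrow> bool" where
  "bruhat_step l l' \<longleftrightarrow> (\<exists>i j. i < j \<and> l i = Down \<and> l j = Up \<and> l' = l(i := Up, j := Down))"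

definition bruhat_le :: "wt \<Rightarrow> wt \<Rightarrow> bool" where
  "bruhat_le m l \<longleftrightarrow> bruhat_step\<^sup>*\<^sup>* m l"

definition wsim :: "wt \<Rightarrow> wt \<Rightarrow> bool" where
  "wsim l m \<longleftrightarrow> (\<exists>\<sigma>::int \<Rightarrow> int. bij \<sigma> \<and> finite {i. \<sigma> i \<noteq> i} \<and>
     (\<forall>i. \<sigma> i \<noteq> i \<longrightarrow> l i \<in> {Down, Up}) \<and> m = l \<circ> \<sigma>)"

datatype cupdiag = CupD (cups: "(int \<times> int) set") (rays: "int set")
datatype capdiag = CapD (caps: "(int \<times> int) set") (uprays: "int set")

definition endpoints :: "(int \<times> int) set \<Rightarrow> int set" where
  "endpoints C = fst ` C \<union> snd ` C"

definition is_cup_diagram :: "cupdiag \<Rightarrow> bool" where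
  "is_cup_diagram c \<longleftrightarrow>
     finite (cups c) \<and>
     (\<forall>(i,j)\<in>cups c. i < j) \<and>
     (\<forall>(i,j)\<in>cups c. \<forall>(k,l)\<in>cups c. {i,j} \<inter> {k,l} \<noteq> {} \<longrightarrow> (i,j) = (k,l)) \<and>
     (\<forall>(i,j)\<in>cups c. \<forall>(k,l)\<in>cups c. i < k \<and> k < j \<longrightarrow> l < j) \<and>
     rays c \<inter> endpoints (cups c) = {} \<and>
     (\<forall>(i,j)\<in>cups c. \<forall>k\<in>rays c. \<not> (i < k \<and> k < j))"

definition cap_mirror :: "capdiag \<Rightarrow> cupdiag" where
  "cap_mirror b = CupD (caps b) (uprays b)"

definition cup_mirror :: "cupdiag \<Rightarrow> capdiag" where
  "cup_mirror a = CapD (cups a) (rays a)"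

definition is_cap_diagram :: "capdiag \<Rightarrow> bool" where
  "is_cap_diagram b \<longleftrightarrow> is_cup_diagram (cap_mirror b)"

definition oriented_cup :: "cupdiag \<Rightarrow> wt \<Rightarrow> bool" where
  "oriented_cup c l \<longleftrightarrow>
     (\<forall>i. i \<notin> endpoints (cups c) \<and> i \<notin> rays c \<longrightarrow> l i \<in> {Circ, Cross}) \<and>
     (\<forall>(i,j)\<in>cups c. (l i = Down \<and> l j = Up) \<or> (l i = Up \<and> l j = Down)) \<and>
     (\<forall>i\<in>rays c. l i \<in> {Down, Up}) \<and>
     (\<forall>i\<in>rays c. \<forall>j\<in>rays c. i < j \<longrightarrow> \<not> (l i = Down \<and> l j = Up))"

definition oriented_cap :: "wt \<Rightarrow> capdiag \<Rightarrow> bool" where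
  "oriented_cap l b \<longleftrightarrow> oriented_cup (cap_mirror b) l"

text \<open>Degree: number of clockwise cups (left end labelled wedge).\<close>
definition cup_degree :: "cupdiag \<Rightarrow> wt \<Rightarrow> nat" where
  "cup_degree c l = card {(i,j). (i,j) \<in> cups c \<and> l i = Up}"

definition underline :: "wt \<Rightarrow> cupdiag" where
  "underline l = (THE c. is_cup_diagram c \<and> oriented_cup c l \<and> cup_degree c l = 0)"

definition overline :: "wt \<Rightarrow> capdiag" where
  "overline l = cup_mirror (underline l)"

definition wsub :: "wt \<Rightarrow> wt \<Rightarrow> bool" where
  "wsub m l \<longleftrightarrow> wsim m l \<and> oriented_cup (underline m) l"

end

theory Submission
  imports Defs
begin

fun dv :: "vlabel \<Rightarrow> int" where
  "dv Down = 1" | "dv Up = -1" | "dv Circ = 0" | "dv Cross = 0"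

definition hs :: "wt \<Rightarrow> int \<Rightarrow> int \<Rightarrow> int" where
  "hs l p q = (\<Sum>k\<in>{p..q}. dv (l k))"

lemma dv_bound: "-1 \<le> dv x \<and> dv x \<le> 1"
  by (cases x) auto

lemma dv_pos: "dv x \<ge> 1 \<Longrightarrow> x = Down"
  by (cases x) auto
lemma dv_neg: "dv x \<le> -1 \<Longrightarrow> x = Up"
  by (cases x) auto

lemma hs_empty: "q < p \<Longrightarrow> hs l p q = 0"
  by (simp add: hs_def)

lemma hs_single: "hs l p p = dv (l p)"
  by (simp add: hs_def)

lemma hs_split: assumes "p - 1 \<le> m" "m \<le> q" shows "hs l p q = hs l p m + hs l (m+1) q"
proof -
  have "{p..q} = {p..m} \<union> {m+1..q}" using assms by auto
  moreover have "{p..m} \<inter> {m+1..q} = {}" by auto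
  ultimately show ?thesis unfolding hs_def by (simp add: sum.union_disjoint)
qed

lemma hs_snoc: "p - 1 \<le> q \<Longrightarrow> hs l p (q+1) = hs l p q + dv (l (q+1))"
  using hs_split[of p q "q+1" l] by (simp add: hs_single)

lemma hs_cons: "p \<le> q \<Longrightarrow> hs l p q = dv (l p) + hs l (p+1) q"
  using hs_split[of p p q l] by (simp add: hs_single)

definition Mt :: "wt \<Rightarrow> (int \<times> int) set" where
  "Mt l = {(i,j). i < j \<and> l i = Down \<and> hs l i j = 0 \<and> (\<forall>k. i \<le> k \<and> k < j \<longrightarrow> hs l i k > 0)}"

definition Rt :: "wt \<Rightarrow> int set" where
  "Rt l = {i. l i \<in> {Down, Up}} - endpoints (Mt l)"

definition canon :: "wt \<Rightarrow> cupdiag" where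
  "canon l = CupD (Mt l) (Rt l)"

lemma Mt_fun: "(i,j) \<in> Mt l \<Longrightarrow> (i,j') \<in> Mt l \<Longrightarrow> j = j'"
  unfolding Mt_def by (auto, metis linorder_neqE_linordered_idom less_irrefl order.strict_implies_order)

lemma Mt_up: assumes "(i,j) \<in> Mt l" shows "l j = Up"
proof -
  from assms have "i < j" "hs l i j = 0" "hs l i (j-1) > 0" unfolding Mt_def by auto
  moreover have "hs l i j = hs l i (j-1) + dv (l j)" using hs_snoc[of i "j-1" l] \<open>i<j\<close> by simp
  ultimately show ?thesis by (intro dv_neg) simp
qed

lemma down_match: assumes "l k = Down" "k \<le> j" "hs l k j \<le> 0" shows "\<exists>q. (k,q) \<in> Mt l"
proof -
  define P where "P n \<longleftrightarrow> hs l k (k + int n) \<le> 0" for n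
  have ex: "P (nat (j - k))" using assms unfolding P_def by simp
  define n0 where "n0 = (LEAST n. P n)"
  have Pn0: "P n0" using ex unfolding n0_def by (rule LeastI)
  have minn: "\<And>n. n < n0 \<Longrightarrow> \<not> P n" unfolding n0_def using not_less_Least by blast
  have hk: "hs l k k = 1" using assms by (simp add: hs_single)
  have n0pos: "n0 > 0" using Pn0 hk unfolding P_def by (cases n0) auto
  define q where "q = k + int n0"
  have "\<forall>m. k \<le> m \<and> m < q \<longrightarrow> hs l k m > 0"
  proof (intro allI impI)
    fix m assume "k \<le> m \<and> m < q"
    then have "nat (m - k) < n0" unfolding q_def by auto
    then have "\<not> P (nat (m-k))" by (rule minn)
    then show "hs l k m > 0" unfolding P_def using \<open>k \<le> m \<and> m < q\<close> by simp
  qed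
  moreover have "hs l k (q-1) > 0" using calculation n0pos unfolding q_def by auto
  moreover have "hs l k q = hs l k (q-1) + dv (l q)" using hs_snoc[of k "q-1" l] n0pos unfolding q_def by simp
  moreover have "hs l k q \<le> 0" using Pn0 unfolding P_def q_def .
  ultimately have "hs l k q = 0" using dv_bound[of "l q"] by linarith
  then have "(k,q) \<in> Mt l" unfolding Mt_def using assms(1) n0pos \<open>\<forall>m. _\<close> q_def by auto
  then show ?thesis by blast
qed

lemma up_match: assumes "l j = Up" "i \<le> j" "hs l i j \<ge> 0" shows "\<exists>p. (p,j) \<in> Mt l"
proof -
  define Z where "Z = {p. i \<le> p \<and> p \<le> j \<and> hs l p j \<ge> 0}"
  have fin: "finite Z" unfolding Z_def by (rule finite_subset[of _ "{i..j}"]) auto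
  have "i \<in> Z" using assms unfolding Z_def by auto
  define p0 where "p0 = Max Z"
  have p0Z: "p0 \<in> Z" unfolding p0_def using fin \<open>i\<in>Z\<close> by (intro Max_in) auto
  have maxp: "\<And>p. p \<in> Z \<Longrightarrow> p \<le> p0" unfolding p0_def using fin by auto
  have hj: "hs l j j = -1" using assms by (simp add: hs_single)
  have "p0 \<noteq> j" using p0Z hj unfolding Z_def by auto
  then have p0j: "p0 < j" using p0Z unfolding Z_def by auto
  have neg: "\<And>m. p0 < m \<Longrightarrow> m \<le> j \<Longrightarrow> hs l m j < 0"
  proof -
    fix m assume "p0 < m" "m \<le> j"
    then have "m \<notin> Z" using maxp by force
    then show "hs l m j < 0" using \<open>p0 < m\<close> \<open>m \<le> j\<close> p0Z unfolding Z_def by auto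
  qed
  have e1: "hs l p0 j = dv (l p0) + hs l (p0+1) j" using hs_cons[of p0 j l] p0j by simp
  have "hs l (p0+1) j < 0" using neg p0j by auto
  moreover have "hs l p0 j \<ge> 0" using p0Z unfolding Z_def by auto
  ultimately have "dv (l p0) \<ge> 1" "hs l p0 j = 0" using e1 dv_bound[of "l p0"] by linarith+
  then have d: "l p0 = Down" by (simp add: dv_pos)
  have "\<forall>m. p0 \<le> m \<and> m < j \<longrightarrow> hs l p0 m > 0"
  proof (intro allI impI)
    fix m assume a: "p0 \<le> m \<and> m < j"
    have "hs l p0 j = hs l p0 m + hs l (m+1) j" using a by (intro hs_split) auto
    moreover have "hs l (m+1) j < 0" using a neg by auto
    ultimately show "hs l p0 m > 0" using \<open>hs l p0 j = 0\<close> by linarith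
  qed
  then have "(p0,j) \<in> Mt l" unfolding Mt_def using d p0j \<open>hs l p0 j = 0\<close> by auto
  then show ?thesis by blast
qed


lemma Mt_lt: "(i,j) \<in> Mt l \<Longrightarrow> i < j" and Mt_down: "(i,j) \<in> Mt l \<Longrightarrow> l i = Down"
  and Mt_zero: "(i,j) \<in> Mt l \<Longrightarrow> hs l i j = 0"
  and Mt_pos: "(i,j) \<in> Mt l \<Longrightarrow> i \<le> k \<Longrightarrow> k < j \<Longrightarrow> hs l i k > 0"
  unfolding Mt_def by auto

lemma Mt_noncross: assumes "(i,j) \<in> Mt l" "(k,q) \<in> Mt l" "i < k" "k < j" shows "q < j"
proof -
  have "hs l i j = hs l i (k-1) + hs l k j" using hs_split[of i "k-1" j l] assms by simp
  moreover have "hs l i (k-1) > 0" using Mt_pos[OF assms(1)] assms by simp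
  ultimately have "hs l k j < 0" using Mt_zero[OF assms(1)] by simp
  moreover have "k \<le> j" using assms by simp
  ultimately show ?thesis using Mt_pos[OF assms(2), of j] Mt_zero[OF assms(2)]
    by (metis linorder_neqE_linordered_idom less_asym)
qed

lemma Mt_inj2: assumes "(i,j) \<in> Mt l" "(i',j) \<in> Mt l" shows "i = i'"
proof (rule ccontr)
  assume "i \<noteq> i'"
  then consider "i < i'" | "i' < i" by linarith
  then show False
  proof cases
    case 1 then show False using Mt_noncross[OF assms(1) assms(2)] Mt_lt[OF assms(2)] by simp
  next
    case 2 then show False using Mt_noncross[OF assms(2) assms(1)] Mt_lt[OF assms(1)] by simp
  qed
qed

lemma Mt_inside: assumes "(i,j) \<in> Mt l" "i < k" "k < j" "l k \<in> {Down, Up}"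
  shows "k \<in> endpoints (Mt l)"
proof (cases "l k = Down")
  case True
  have "hs l i j = hs l i (k-1) + hs l k j" using hs_split[of i "k-1" j l] assms by simp
  moreover have "hs l i (k-1) > 0" using Mt_pos[OF assms(1)] assms by simp
  ultimately have "hs l k j \<le> 0" using Mt_zero[OF assms(1)] by simp
  then obtain q where "(k,q) \<in> Mt l" using down_match[of l k j] True assms by force
  then show ?thesis unfolding endpoints_def by force
next
  case False
  then have "l k = Up" using assms by auto
  moreover have "hs l i k \<ge> 0" using Mt_pos[OF assms(1), of k] assms by simp
  ultimately obtain p where "(p,k) \<in> Mt l" using up_match[of l k i] assms by force
  then show ?thesis unfolding endpoints_def by force
qed

lemma canon_props: assumes "weight l"
  shows "is_cup_diagram (canon l) \<and> oriented_cup (canon l) l \<and> cup_degree (canon l) l = 0"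
proof -
  obtain F where F: "finite F" "\<And>i j. i \<notin> F \<Longrightarrow> j \<notin> F \<Longrightarrow> i < j \<Longrightarrow> \<not> (l i = Down \<and> l j = Up)"
    using assms unfolding weight_def by blast
  have sub: "Mt l \<subseteq> {x\<in>Mt l. fst x \<in> F} \<union> {x\<in>Mt l. snd x \<in> F}"
  proof
    fix x assume "x \<in> Mt l"
    then obtain i j where x: "x = (i,j)" "(i,j) \<in> Mt l" by (cases x) auto
    then show "x \<in> {x\<in>Mt l. fst x \<in> F} \<union> {x\<in>Mt l. snd x \<in> F}"
      using F(2)[of i j] Mt_lt Mt_down Mt_up by fastforce
  qed
  have f1: "finite {x\<in>Mt l. fst x \<in> F}"
  proof (rule finite_imageD)
    show "finite (fst ` {x\<in>Mt l. fst x \<in> F})" using F(1) by (rule finite_subset[rotated]) auto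
    show "inj_on fst {x\<in>Mt l. fst x \<in> F}" unfolding inj_on_def using Mt_fun by fastforce
  qed
  have f2: "finite {x\<in>Mt l. snd x \<in> F}"
  proof (rule finite_imageD)
    show "finite (snd ` {x\<in>Mt l. snd x \<in> F})" using F(1) by (rule finite_subset[rotated]) auto
    show "inj_on snd {x\<in>Mt l. snd x \<in> F}" unfolding inj_on_def using Mt_inj2 by fastforce
  qed
  have fin: "finite (Mt l)" using sub f1 f2 finite_subset by blast
  have disj: "\<forall>(i,j)\<in>Mt l. \<forall>(k,q)\<in>Mt l. {i,j} \<inter> {k,q} \<noteq> {} \<longrightarrow> (i,j) = (k,q)"
  proof (clarify)
    fix i j k q assume a: "(i,j) \<in> Mt l" "(k,q) \<in> Mt l" "{i,j} \<inter> {k,q} \<noteq> {}"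
    have "l i = Down" "l j = Up" "l k = Down" "l q = Up" using a Mt_down Mt_up by blast+
    then have "i = k \<or> j = q" using a(3) by auto
    then show "i = k \<and> j = q" using Mt_fun[OF a(1)] Mt_inj2[OF a(1)] a(2) by blast
  qed
  have cup: "is_cup_diagram (canon l)"
    unfolding is_cup_diagram_def canon_def cupdiag.sel
  proof (intro conjI)
    show "finite (Mt l)" by (rule fin)
    show "\<forall>(i,j)\<in>Mt l. i < j" using Mt_lt by blast
    show "\<forall>(i,j)\<in>Mt l. \<forall>(k,q)\<in>Mt l. {i,j} \<inter> {k,q} \<noteq> {} \<longrightarrow> (i,j) = (k,q)" by (rule disj)
    show "\<forall>(i,j)\<in>Mt l. \<forall>(k,q)\<in>Mt l. i < k \<and> k < j \<longrightarrow> q < j" using Mt_noncross by blast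
    show "Rt l \<inter> endpoints (Mt l) = {}" unfolding Rt_def by auto
    show "\<forall>(i,j)\<in>Mt l. \<forall>k\<in>Rt l. \<not> (i < k \<and> k < j)" unfolding Rt_def using Mt_inside by blast
  qed
  have ori: "oriented_cup (canon l) l"
    unfolding oriented_cup_def canon_def cupdiag.sel
  proof (intro conjI)
    show "\<forall>i. i \<notin> endpoints (Mt l) \<and> i \<notin> Rt l \<longrightarrow> l i \<in> {Circ, Cross}"
    proof (intro allI impI)
      fix i assume "i \<notin> endpoints (Mt l) \<and> i \<notin> Rt l"
      then have "l i \<notin> {Down, Up}" unfolding Rt_def by auto
      then show "l i \<in> {Circ, Cross}" by (cases "l i") auto
    qed
    show "\<forall>(i,j)\<in>Mt l. (l i = Down \<and> l j = Up) \<or> (l i = Up \<and> l j = Down)" using Mt_down Mt_up by blast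
    show "\<forall>i\<in>Rt l. l i \<in> {Down, Up}" unfolding Rt_def by auto
    show "\<forall>i\<in>Rt l. \<forall>j\<in>Rt l. i < j \<longrightarrow> \<not> (l i = Down \<and> l j = Up)"
    proof (intro ballI impI notI)
      fix i j assume a: "i \<in> Rt l" "j \<in> Rt l" "i < j" "l i = Down \<and> l j = Up"
      show False
      proof (cases "hs l i j \<le> 0")
        case True
        then obtain q where "(i,q) \<in> Mt l" using down_match[of l i j] a by force
        then show False using a(1) unfolding Rt_def endpoints_def by force
      next
        case False
        then obtain p where "(p,j) \<in> Mt l" using up_match[of l j i] a by force
        then show False using a(2) unfolding Rt_def endpoints_def by force
      qed
    qed
  qed
  have deg: "cup_degree (canon l) l = 0"
  proof -
    have "{(i,j). (i,j) \<in> Mt l \<and> l i = Up} = {}" using Mt_down by fastforce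
    then show ?thesis unfolding cup_degree_def canon_def cupdiag.sel by (simp only: card.empty)
  qed
  show ?thesis using cup ori deg by blast
qed


lemma cd_unf: assumes "is_cup_diagram c" shows
  "finite (cups c)"
  "\<forall>(i,j)\<in>cups c. i < j"
  "\<forall>(i,j)\<in>cups c. \<forall>(k,l)\<in>cups c. {i,j} \<inter> {k,l} \<noteq> {} \<longrightarrow> (i,j) = (k,l)"
  "\<forall>(i,j)\<in>cups c. \<forall>(k,l)\<in>cups c. i < k \<and> k < j \<longrightarrow> l < j"
  "rays c \<inter> endpoints (cups c) = {}"
  "\<forall>(i,j)\<in>cups c. \<forall>k\<in>rays c. \<not> (i < k \<and> k < j)"
  using assms unfolding is_cup_diagram_def by simp_all

lemma cd_fin: "is_cup_diagram c \<Longrightarrow> finite (cups c)"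
  using cd_unf(1) by blast
lemma cd_lt: "is_cup_diagram c \<Longrightarrow> (a,b) \<in> cups c \<Longrightarrow> a < b"
  using cd_unf(2) by fast
lemma cd_disj: "is_cup_diagram c \<Longrightarrow> (a,b) \<in> cups c \<Longrightarrow> (a',b') \<in> cups c \<Longrightarrow> {a,b} \<inter> {a',b'} \<noteq> {} \<Longrightarrow> a = a' \<and> b = b'"
  using cd_unf(3) by fast
lemma cd_nest: "is_cup_diagram c \<Longrightarrow> (a,b) \<in> cups c \<Longrightarrow> (a',b') \<in> cups c \<Longrightarrow> a < a' \<Longrightarrow> a' < b \<Longrightarrow> b' < b"
  using cd_unf(4) by fast
lemma cd_rend: "is_cup_diagram c \<Longrightarrow> x \<in> rays c \<Longrightarrow> x \<notin> endpoints (cups c)"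
  using cd_unf(5) by fast
lemma cd_rin: "is_cup_diagram c \<Longrightarrow> (a,b) \<in> cups c \<Longrightarrow> x \<in> rays c \<Longrightarrow> a < x \<Longrightarrow> x < b \<Longrightarrow> False"
  using cd_unf(6) by fast

lemma or_unf: assumes "oriented_cup c g" shows
  "\<forall>i. i \<notin> endpoints (cups c) \<and> i \<notin> rays c \<longrightarrow> g i \<in> {Circ, Cross}"
  "\<forall>(i,j)\<in>cups c. (g i = Down \<and> g j = Up) \<or> (g i = Up \<and> g j = Down)"
  "\<forall>i\<in>rays c. g i \<in> {Down, Up}"
  "\<forall>i\<in>rays c. \<forall>j\<in>rays c. i < j \<longrightarrow> \<not> (g i = Down \<and> g j = Up)"
  using assms unfolding oriented_cup_def by simp_all

lemma or_free: "oriented_cup c g \<Longrightarrow> x \<notin> endpoints (cups c) \<Longrightarrow> x \<notin> rays c \<Longrightarrow> g x \<in> {Circ, Cross}"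
  using or_unf(1) by blast
lemma or_cup: "oriented_cup c g \<Longrightarrow> (a,b) \<in> cups c \<Longrightarrow> (g a = Down \<and> g b = Up) \<or> (g a = Up \<and> g b = Down)"
  using or_unf(2) by fast
lemma or_ray: "oriented_cup c g \<Longrightarrow> x \<in> rays c \<Longrightarrow> g x \<in> {Down, Up}"
  using or_unf(3) by blast
lemma or_rord: "oriented_cup c g \<Longrightarrow> x \<in> rays c \<Longrightarrow> y \<in> rays c \<Longrightarrow> x < y \<Longrightarrow> g x = Down \<Longrightarrow> g y = Up \<Longrightarrow> False"
  using or_unf(4) by blast

definition Sk :: "cupdiag \<Rightarrow> int \<Rightarrow> int \<Rightarrow> (int \<times> int) set" where
  "Sk c p k = {x\<in>cups c. p \<le> fst x \<and> fst x \<le> k \<and> k < snd x}"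

lemma Sk_same: assumes "k + 1 \<notin> endpoints (cups c)" shows "Sk c p (k+1) = Sk c p k"
proof -
  have "\<And>a b. (a,b) \<in> cups c \<Longrightarrow> a \<noteq> k+1 \<and> b \<noteq> k+1"
    using assms unfolding endpoints_def by force
  then show ?thesis unfolding Sk_def by fastforce
qed

lemma Lsum:
  assumes cd: "is_cup_diagram c" and or: "oriented_cup c g" and k: "p - 1 \<le> k"
    and cond: "\<And>a b. (a,b) \<in> cups c \<Longrightarrow> \<not> (a < p \<and> p \<le> b \<and> b \<le> k)"
  shows "hs g p k = (\<Sum>x\<in>Sk c p k. dv (g (fst x))) + (\<Sum>x\<in>rays c \<inter> {p..k}. dv (g x))"
  using k cond
proof (induction k rule: int_ge_induct)
  case base
  have "Sk c p (p-1) = {}" unfolding Sk_def by auto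
  then show ?case by (simp add: hs_empty)
next
  case (step k)
  define K where "K = k + 1"
  have IH: "hs g p k = (\<Sum>x\<in>Sk c p k. dv (g (fst x))) + (\<Sum>x\<in>rays c \<inter> {p..k}. dv (g x))"
  proof (rule step.IH)
    fix a b assume "(a,b) \<in> cups c"
    then have "\<not> (a < p \<and> p \<le> b \<and> b \<le> k+1)" by (rule step.prems)
    then show "\<not> (a < p \<and> p \<le> b \<and> b \<le> k)" by auto
  qed
  have h1: "hs g p K = hs g p k + dv (g K)" unfolding K_def using step.hyps by (rule hs_snoc)
  have finS: "finite (Sk c p k)" "finite (Sk c p K)" unfolding Sk_def using cd_fin[OF cd] by auto
  have pK: "p \<le> K" using step.hyps K_def by simp
  consider (L) b where "(K,b) \<in> cups c" | (R) a where "(a,K) \<in> cups c"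
    | (Ray) "K \<in> rays c" | (Free) "K \<notin> endpoints (cups c)" "K \<notin> rays c"
  proof -
    assume a1: "\<And>b. (K,b) \<in> cups c \<Longrightarrow> thesis" and a2: "\<And>a. (a,K) \<in> cups c \<Longrightarrow> thesis"
      and a3: "K \<in> rays c \<Longrightarrow> thesis" and a4: "K \<notin> endpoints (cups c) \<Longrightarrow> K \<notin> rays c \<Longrightarrow> thesis"
    show thesis
    proof (cases "K \<in> endpoints (cups c)")
      case True
      then consider "K \<in> fst ` cups c" | "K \<in> snd ` cups c" unfolding endpoints_def by blast
      then show thesis
      proof cases
        case 1 then obtain x where "x \<in> cups c" "K = fst x" by blast
        then show thesis using a1[of "snd x"] by simp
      next
        case 2 then obtain x where "x \<in> cups c" "K = snd x" by blast
        then show thesis using a2[of "fst x"] by simp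
      qed
    next
      case False then show thesis using a3 a4 by blast
    qed
  qed
  then show ?case
  proof cases
    case L
    have Kb: "K < b" using cd_lt[OF cd L] .
    have e: "Sk c p K = insert (K,b) (Sk c p k)"
    proof (intro set_eqI iffI)
      fix x assume "x \<in> Sk c p K"
      then obtain a' b' where x: "x = (a',b')" "(a',b') \<in> cups c" "p \<le> a'" "a' \<le> K" "K < b'"
        unfolding Sk_def by (cases x) auto
      show "x \<in> insert (K,b) (Sk c p k)"
      proof (cases "a' = K")
        case True
        have "a' = K \<and> b' = b" by (rule cd_disj[OF cd x(2) L]) (use True in blast)
        then show ?thesis using x(1) by simp
      next
        case False then show ?thesis using x unfolding Sk_def K_def by auto
      qed
    next
      fix x assume "x \<in> insert (K,b) (Sk c p k)"
      then consider "x = (K,b)" | a' b' where "x = (a',b')" "(a',b') \<in> cups c" "p \<le> a'" "a' \<le> k" "k < b'"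
        unfolding Sk_def by (cases x) auto
      then show "x \<in> Sk c p K"
      proof cases
        case 1 then show ?thesis using L pK Kb unfolding Sk_def by auto
      next
        case 2
        have "b' \<noteq> K"
        proof
          assume "b' = K"
          then have "a' = K \<and> b' = b" by (intro cd_disj[OF cd 2(2) L]) blast
          then show False using Kb \<open>b' = K\<close> by simp
        qed
        then show ?thesis using 2 unfolding Sk_def K_def by auto
      qed
    qed
    have nin: "(K,b) \<notin> Sk c p k" unfolding Sk_def K_def by auto
    have notray: "K \<notin> rays c" using cd_rend[OF cd] L unfolding endpoints_def by force
    have "{p..K} = insert K {p..k}" using pK K_def by auto
    then have rr: "rays c \<inter> {p..K} = rays c \<inter> {p..k}" using notray by auto
    show ?thesis unfolding K_def[symmetric] using h1 IH e nin finS rr by simp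
  next
    case R
    have aK: "a < K" using cd_lt[OF cd R] .
    have ap: "p \<le> a" using step.prems[OF R] pK K_def by auto
    have e: "Sk c p k = insert (a,K) (Sk c p K)"
    proof (intro set_eqI iffI)
      fix x assume "x \<in> Sk c p k"
      then obtain a' b' where x: "x = (a',b')" "(a',b') \<in> cups c" "p \<le> a'" "a' \<le> k" "k < b'"
        unfolding Sk_def by (cases x) auto
      show "x \<in> insert (a,K) (Sk c p K)"
      proof (cases "b' = K")
        case True
        have "a' = a \<and> b' = K" by (rule cd_disj[OF cd x(2) R]) (use True in blast)
        then show ?thesis using x(1) by simp
      next
        case False then show ?thesis using x unfolding Sk_def K_def by auto
      qed
    next
      fix x assume "x \<in> insert (a,K) (Sk c p K)"
      then consider "x = (a,K)" | a' b' where "x = (a',b')" "(a',b') \<in> cups c" "p \<le> a'" "a' \<le> K" "K < b'"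
        unfolding Sk_def by (cases x) auto
      then show "x \<in> Sk c p k"
      proof cases
        case 1 then show ?thesis using R ap aK unfolding Sk_def K_def by auto
      next
        case 2
        have "a' \<noteq> K"
        proof
          assume "a' = K"
          then have "a' = a \<and> b' = K" by (intro cd_disj[OF cd 2(2) R]) blast
          then show False using aK \<open>a' = K\<close> by simp
        qed
        then show ?thesis using 2 unfolding Sk_def K_def by auto
      qed
    qed
    have nin: "(a,K) \<notin> Sk c p K" unfolding Sk_def by auto
    have notray: "K \<notin> rays c" using cd_rend[OF cd] R unfolding endpoints_def by force
    have "{p..K} = insert K {p..k}" using pK K_def by auto
    then have rr: "rays c \<inter> {p..K} = rays c \<inter> {p..k}" using notray by auto
    have dd: "dv (g a) = - dv (g K)" using or_cup[OF or R] by auto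
    show ?thesis unfolding K_def[symmetric] using h1 IH e nin finS rr dd by simp
  next
    case Ray
    have ne: "K \<notin> endpoints (cups c)" using cd_rend[OF cd Ray] .
    have e: "Sk c p K = Sk c p k" unfolding K_def by (rule Sk_same) (use ne K_def in auto)
    have rr: "rays c \<inter> {p..K} = insert K (rays c \<inter> {p..k})" using Ray pK K_def by auto
    have "K \<notin> rays c \<inter> {p..k}" using K_def by auto
    then show ?thesis unfolding K_def[symmetric] using h1 IH e rr by simp
  next
    case Free
    have e: "Sk c p K = Sk c p k" unfolding K_def by (rule Sk_same) (use Free K_def in auto)
    have "{p..K} = insert K {p..k}" using pK K_def by auto
    then have rr: "rays c \<inter> {p..K} = rays c \<inter> {p..k}" using Free by auto
    have "dv (g K) = 0" using or_free[OF or Free] by auto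
    then show ?thesis unfolding K_def[symmetric] using h1 IH e rr by simp
  qed
qed


lemma deg0_down: assumes cd: "is_cup_diagram c" and or: "oriented_cup c l" and deg: "cup_degree c l = 0"
  and ab: "(a,b) \<in> cups c" shows "l a = Down \<and> l b = Up"
proof -
  have "finite {(i,j). (i,j) \<in> cups c \<and> l i = Up}"
    by (rule finite_subset[OF _ cd_fin[OF cd]]) auto
  then have "{(i,j). (i,j) \<in> cups c \<and> l i = Up} = {}" using deg unfolding cup_degree_def by simp
  then have "l a \<noteq> Up" using ab by blast
  then show ?thesis using or_cup[OF or ab] by auto
qed

lemma cup_cond: assumes cd: "is_cup_diagram c" and ij: "(i,j) \<in> cups c" and "k \<le> j"
  and ab: "(a,b) \<in> cups c" shows "\<not> (a < i \<and> i \<le> b \<and> b \<le> k)"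
proof
  assume h: "a < i \<and> i \<le> b \<and> b \<le> k"
  have ij': "i < j" using cd_lt[OF cd ij] .
  consider "b = i" | "b = j" | "i < b \<and> b < j" using h assms(3) by linarith
  then show False
  proof cases
    case 1 then have "a = i \<and> b = j" by (intro cd_disj[OF cd ab ij]) blast
    then show False using h by simp
  next
    case 2 then have "a = i \<and> b = j" by (intro cd_disj[OF cd ab ij]) blast
    then show False using h by simp
  next
    case 3 then have "j < b" using cd_nest[OF cd ab ij] h by blast
    then show False using 3 by simp
  qed
qed

lemma cup_norays: assumes cd: "is_cup_diagram c" and ij: "(i,j) \<in> cups c" and "k \<le> j"
  shows "rays c \<inter> {i..k} = {}"
proof (rule ccontr)
  assume "rays c \<inter> {i..k} \<noteq> {}"
  then obtain x where x: "x \<in> rays c" "i \<le> x" "x \<le> j" using assms(3) by force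
  have ne: "x \<notin> endpoints (cups c)" using cd_rend[OF cd x(1)] .
  have "i \<in> endpoints (cups c)" "j \<in> endpoints (cups c)"
    unfolding endpoints_def using ij by (simp_all add: rev_image_eqI)
  then have "i < x" "x < j" using ne x by (metis order.not_eq_order_implies_strict)+
  then show False using cd_rin[OF cd ij x(1)] by blast
qed

lemma cup_in_Mt: assumes cd: "is_cup_diagram c" and or: "oriented_cup c l" and deg: "cup_degree c l = 0"
  and ij: "(i,j) \<in> cups c" shows "(i,j) \<in> Mt l"
proof -
  have ij': "i < j" using cd_lt[OF cd ij] .
  have dn: "\<And>S. S \<subseteq> cups c \<Longrightarrow> (\<Sum>x\<in>S. dv (l (fst x))) = int (card S)"
  proof -
    fix S assume "S \<subseteq> cups c"
    then have "\<And>x. x \<in> S \<Longrightarrow> dv (l (fst x)) = 1" using deg0_down[OF cd or deg] by fastforce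
    then show "(\<Sum>x\<in>S. dv (l (fst x))) = int (card S)" by simp
  qed
  have hk: "\<And>k. i - 1 \<le> k \<Longrightarrow> k \<le> j \<Longrightarrow> hs l i k = int (card (Sk c i k))"
  proof -
    fix k assume k: "i - 1 \<le> k" "k \<le> j"
    have "hs l i k = (\<Sum>x\<in>Sk c i k. dv (l (fst x))) + (\<Sum>x\<in>rays c \<inter> {i..k}. dv (l x))"
      using Lsum[OF cd or k(1)] cup_cond[OF cd ij k(2)] by blast
    moreover have "rays c \<inter> {i..k} = {}" using cup_norays[OF cd ij k(2)] .
    moreover have "Sk c i k \<subseteq> cups c" unfolding Sk_def by auto
    ultimately show "hs l i k = int (card (Sk c i k))" using dn by simp
  qed
  have "Sk c i j = {}"
  proof (rule ccontr)
    assume "Sk c i j \<noteq> {}"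
    then obtain a b where ab: "(a,b) \<in> cups c" "i \<le> a" "a \<le> j" "j < b" unfolding Sk_def by auto
    consider "a = i" | "a = j" | "i < a \<and> a < j" using ab by linarith
    then show False
    proof cases
      case 1 then have "a = i \<and> b = j" by (intro cd_disj[OF cd ab(1) ij]) blast
      then show False using ab by simp
    next
      case 2 then have "a = i \<and> b = j" by (intro cd_disj[OF cd ab(1) ij]) blast
      then show False using ab ij' by simp
    next
      case 3 then have "b < j" using cd_nest[OF cd ij ab(1)] by blast
      then show False using ab by simp
    qed
  qed
  then have z: "hs l i j = 0" using hk[of j] ij' by simp
  have pos: "\<forall>k. i \<le> k \<and> k < j \<longrightarrow> hs l i k > 0"
  proof (intro allI impI)
    fix k assume k: "i \<le> k \<and> k < j"
    have "(i,j) \<in> Sk c i k" unfolding Sk_def using ij k by auto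
    moreover have "finite (Sk c i k)" unfolding Sk_def using cd_fin[OF cd] by auto
    ultimately have "card (Sk c i k) > 0" using card_gt_0_iff by blast
    then show "hs l i k > 0" using hk[of k] k by simp
  qed
  show ?thesis unfolding Mt_def using ij' z pos deg0_down[OF cd or deg ij] by auto
qed

lemma Mt_in_cup: assumes cd: "is_cup_diagram c" and or: "oriented_cup c l" and deg: "cup_degree c l = 0"
  and ij: "(i,j) \<in> Mt l" shows "(i,j) \<in> cups c"
proof -
  have li: "l i = Down" using Mt_down[OF ij] .
  have ij': "i < j" using Mt_lt[OF ij] .
  show ?thesis
  proof (cases "i \<in> endpoints (cups c)")
    case True
    then consider "i \<in> fst ` cups c" | "i \<in> snd ` cups c" unfolding endpoints_def by blast
    then show ?thesis
    proof cases
      case 1 then obtain j' where j': "(i,j') \<in> cups c" by force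
      have "(i,j') \<in> Mt l" using cup_in_Mt[OF cd or deg j'] .
      then have "j' = j" using Mt_fun[OF _ ij] by blast
      then show ?thesis using j' by simp
    next
      case 2 then obtain a where a: "(a,i) \<in> cups c" by force
      then have "l i = Up" using deg0_down[OF cd or deg a] by simp
      then show ?thesis using li by simp
    qed
  next
    case False
    then have ray: "i \<in> rays c" using or_free[OF or False] li by auto
    have cnd: "\<And>a b. (a,b) \<in> cups c \<Longrightarrow> \<not> (a < i \<and> i \<le> b \<and> b \<le> j)"
    proof
      fix a b assume ab: "(a,b) \<in> cups c" and h: "a < i \<and> i \<le> b \<and> b \<le> j"
      have "b \<noteq> i" using False ab unfolding endpoints_def by (metis UnI2 image_eqI snd_conv)
      then have "i < b" using h by simp
      then show False using cd_rin[OF cd ab ray] h by blast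
    qed
    have hs: "hs l i j = (\<Sum>x\<in>Sk c i j. dv (l (fst x))) + (\<Sum>x\<in>rays c \<inter> {i..j}. dv (l x))"
      using Lsum[OF cd or, of i j] ij' cnd by simp
    have s1: "(\<Sum>x\<in>Sk c i j. dv (l (fst x))) \<ge> 0"
    proof (rule sum_nonneg)
      fix x assume "x \<in> Sk c i j"
      then have "x \<in> cups c" unfolding Sk_def by auto
      then have "l (fst x) = Down" using deg0_down[OF cd or deg, of "fst x" "snd x"] by simp
      then show "dv (l (fst x)) \<ge> 0" by simp
    qed
    have dn: "\<And>x. x \<in> rays c \<inter> {i..j} \<Longrightarrow> dv (l x) = 1"
    proof -
      fix x assume x: "x \<in> rays c \<inter> {i..j}"
      show "dv (l x) = 1"
      proof (cases "x = i")
        case True then show ?thesis using li by simp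
      next
        case False
        then have "i < x" using x by auto
        then have "l x \<noteq> Up" using or_rord[OF or ray, of x] x li by blast
        then have "l x = Down" using or_ray[OF or, of x] x by auto
        then show ?thesis by simp
      qed
    qed
    have "(\<Sum>x\<in>rays c \<inter> {i..j}. dv (l x)) = int (card (rays c \<inter> {i..j}))"
      using dn by simp
    moreover have "card (rays c \<inter> {i..j}) > 0" using ray ij' by (subst card_gt_0_iff) auto
    ultimately have "hs l i j > 0" using hs s1 by simp
    then show ?thesis using Mt_zero[OF ij] by simp
  qed
qed

lemma canon_unique: assumes cd: "is_cup_diagram c" and or: "oriented_cup c l" and deg: "cup_degree c l = 0"
  shows "c = canon l"
proof -
  have cm: "cups c = Mt l" using cup_in_Mt[OF cd or deg] Mt_in_cup[OF cd or deg] by auto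
  have "rays c = Rt l"
  proof (intro set_eqI iffI)
    fix x assume "x \<in> rays c"
    then show "x \<in> Rt l" unfolding Rt_def using or_ray[OF or] cd_rend[OF cd] cm by auto
  next
    fix x assume x: "x \<in> Rt l"
    show "x \<in> rays c"
    proof (rule ccontr)
      assume "x \<notin> rays c"
      moreover have "x \<notin> endpoints (cups c)" using x cm unfolding Rt_def by auto
      ultimately have "l x \<in> {Circ, Cross}" using or_free[OF or] by blast
      then show False using x unfolding Rt_def by auto
    qed
  qed
  then show ?thesis unfolding canon_def using cm by (metis cupdiag.collapse)
qed

lemma underline_eq: assumes "weight l" shows "underline l = canon l"
  unfolding underline_def
proof (rule the_equality)
  show "is_cup_diagram (canon l) \<and> oriented_cup (canon l) l \<and> cup_degree (canon l) l = 0"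
    using canon_props[OF assms] .
  show "\<And>c. is_cup_diagram c \<and> oriented_cup c l \<and> cup_degree c l = 0 \<Longrightarrow> c = canon l"
    using canon_unique by blast
qed

lemma underline_props: assumes "weight l"
  shows "is_cup_diagram (underline l) \<and> oriented_cup (underline l) l \<and> cup_degree (underline l) l = 0"
  using canon_props[OF assms] underline_eq[OF assms] by simp


lemma ray_sum_lt:
  assumes cd: "is_cup_diagram c" and o1: "oriented_cup c g1" and o2: "oriented_cup c g2"
    and fin: "finite R" and R: "R \<subseteq> rays c" and x: "x \<in> R" and g1x: "g1 x = Up" and g2x: "g2 x = Down"
  shows "(\<Sum>y\<in>R. dv (g1 y)) < (\<Sum>y\<in>R. dv (g2 y))"
proof (rule sum_strict_mono_ex1[OF fin])
  show "\<forall>y\<in>R. dv (g1 y) \<le> dv (g2 y)"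
  proof
    fix y assume y: "y \<in> R"
    then have yr: "y \<in> rays c" using R by auto
    have xr: "x \<in> rays c" using x R by auto
    consider "y < x" | "y = x" | "x < y" by linarith
    then show "dv (g1 y) \<le> dv (g2 y)"
    proof cases
      case 1
      then have "g1 y \<noteq> Down" using or_rord[OF o1 yr xr] g1x by blast
      then have "g1 y = Up" using or_ray[OF o1 yr] by auto
      then show ?thesis using dv_bound[of "g2 y"] by simp
    next
      case 2 then show ?thesis using g1x g2x by simp
    next
      case 3
      then have "g2 y \<noteq> Up" using or_rord[OF o2 xr yr] g2x by blast
      then have "g2 y = Down" using or_ray[OF o2 yr] by auto
      then show ?thesis using dv_bound[of "g1 y"] by simp
    qed
  qed
  show "\<exists>a\<in>R. dv (g1 a) < dv (g2 a)" using x g1x g2x by force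
qed

lemma agree:
  assumes cd: "is_cup_diagram c" and om: "oriented_cup c m" and ol: "oriented_cup c l"
    and ws: "wsim m l" and xe: "x \<notin> endpoints (cups c)"
  shows "l x = m x"
proof -
  obtain \<sigma> :: "int \<Rightarrow> int" where bs: "bij \<sigma>" and fs: "finite {i. \<sigma> i \<noteq> i}"
    and mv: "\<And>i. \<sigma> i \<noteq> i \<Longrightarrow> m i \<in> {Down, Up}" and lm: "l = m \<circ> \<sigma>"
    using ws unfolding wsim_def by blast
  define D where "D = {i. \<sigma> i \<noteq> i}"
  show ?thesis
  proof (cases "\<sigma> x = x")
    case True then show ?thesis using lm by simp
  next
    case False
    then have xD: "x \<in> D" unfolding D_def by simp
    have xr: "x \<in> rays c"
    proof (rule ccontr)
      assume "x \<notin> rays c"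
      then have "m x \<in> {Circ, Cross}" using or_free[OF om xe] by blast
      then show False using mv[OF False] by auto
    qed
    show ?thesis
    proof (rule ccontr)
      assume ne: "l x \<noteq> m x"
      define U where "U = insert x (D \<union> endpoints (cups c))"
      have finU: "finite U" unfolding U_def D_def endpoints_def using fs cd_fin[OF cd] by auto
      define A where "A = Min U"
      define B where "B = Max U"
      have UAB: "U \<subseteq> {A..B}" unfolding A_def B_def using finU by auto
      have xAB: "x \<in> {A..B}" using UAB unfolding U_def by auto
      have out: "\<And>y. y \<notin> {A..B} \<Longrightarrow> \<sigma> y = y" using UAB unfolding U_def D_def by blast
      have inj: "inj \<sigma>" using bs bij_def by blast
      have bab: "bij_betw \<sigma> {A..B} {A..B}"
      proof (rule bij_betw_imageI)
        show "inj_on \<sigma> {A..B}" using inj inj_on_subset by blast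
        show "\<sigma> ` {A..B} = {A..B}"
        proof (intro set_eqI iffI)
          fix z assume "z \<in> \<sigma> ` {A..B}"
          then obtain y where y: "y \<in> {A..B}" "z = \<sigma> y" by blast
          show "z \<in> {A..B}"
          proof (cases "\<sigma> y = y")
            case True then show ?thesis using y by simp
          next
            case False
            have "\<sigma> (\<sigma> y) \<noteq> \<sigma> y" using False inj by (metis injD)
            then show ?thesis using out y by blast
          qed
        next
          fix z assume z: "z \<in> {A..B}"
          obtain y where y: "z = \<sigma> y" using bs by (metis bij_pointE)
          have "y \<in> {A..B}" using out y z by metis
          then show "z \<in> \<sigma> ` {A..B}" using y by blast
        qed
      qed
      have hlm: "hs l A B = hs m A B"
        unfolding hs_def lm o_def using sum.reindex_bij_betw[OF bab, of "\<lambda>k. dv (m k)"] by simp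
      have AB: "A - 1 \<le> B" using xAB by auto
      have cnd: "\<And>a b. (a,b) \<in> cups c \<Longrightarrow> \<not> (a < A \<and> A \<le> b \<and> b \<le> B)"
      proof -
        fix a b assume "(a,b) \<in> cups c"
        then have "a \<in> U" unfolding U_def endpoints_def by (simp add: rev_image_eqI)
        then show "\<not> (a < A \<and> A \<le> b \<and> b \<le> B)" using UAB by auto
      qed
      have Se: "Sk c A B = {}"
      proof -
        have "\<And>a b. (a,b) \<in> cups c \<Longrightarrow> b \<le> B"
        proof -
          fix a b assume "(a,b) \<in> cups c"
          then have "b \<in> U" unfolding U_def endpoints_def by (simp add: rev_image_eqI)
          then show "b \<le> B" using UAB by auto
        qed
        then show ?thesis unfolding Sk_def by fastforce
      qed
      have el: "hs l A B = (\<Sum>y\<in>rays c \<inter> {A..B}. dv (l y))"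
        using Lsum[OF cd ol AB] cnd Se by simp
      have em: "hs m A B = (\<Sum>y\<in>rays c \<inter> {A..B}. dv (m y))"
        using Lsum[OF cd om AB] cnd Se by simp
      have xR: "x \<in> rays c \<inter> {A..B}" using xr xAB by simp
      have "l x \<in> {Down, Up}" "m x \<in> {Down, Up}" using or_ray[OF ol xr] or_ray[OF om xr] by auto
      then consider "l x = Up \<and> m x = Down" | "l x = Down \<and> m x = Up" using ne by auto
      then show False
      proof cases
        case 1
        have "(\<Sum>y\<in>rays c \<inter> {A..B}. dv (l y)) < (\<Sum>y\<in>rays c \<inter> {A..B}. dv (m y))"
          by (rule ray_sum_lt[OF cd ol om _ _ xR]) (use 1 in auto)
        then show False using el em hlm by simp
      next
        case 2
        have "(\<Sum>y\<in>rays c \<inter> {A..B}. dv (m y)) < (\<Sum>y\<in>rays c \<inter> {A..B}. dv (l y))"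
          by (rule ray_sum_lt[OF cd om ol _ _ xR]) (use 2 in auto)
        then show False using el em hlm by simp
      qed
    qed
  qed
qed

definition flip :: "(int \<times> int) set \<Rightarrow> wt \<Rightarrow> wt" where
  "flip C m x = (if x \<in> fst ` C then Up else if x \<in> snd ` C then Down else m x)"

lemma wsim_refl: "wsim m m"
  unfolding wsim_def by (rule exI[of _ id]) auto

lemma wsim_trans: assumes "wsim a b" "wsim b d" shows "wsim a d"
proof -
  obtain \<sigma> :: "int \<Rightarrow> int" where s: "bij \<sigma>" "finite {i. \<sigma> i \<noteq> i}"
    "\<And>i. \<sigma> i \<noteq> i \<Longrightarrow> a i \<in> {Down, Up}" "b = a \<circ> \<sigma>"
    using assms(1) unfolding wsim_def by blast
  obtain \<tau> :: "int \<Rightarrow> int" where t: "bij \<tau>" "finite {i. \<tau> i \<noteq> i}"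
    "\<And>i. \<tau> i \<noteq> i \<Longrightarrow> b i \<in> {Down, Up}" "d = b \<circ> \<tau>"
    using assms(2) unfolding wsim_def by blast
  show ?thesis unfolding wsim_def
  proof (intro exI conjI allI impI)
    show "bij (\<sigma> \<circ> \<tau>)" using s(1) t(1) by (rule bij_comp[rotated])
    show "finite {i. (\<sigma> \<circ> \<tau>) i \<noteq> i}"
      by (rule finite_subset[of _ "{i. \<sigma> i \<noteq> i} \<union> {i. \<tau> i \<noteq> i}"]) (use s(2) t(2) in auto)
    show "d = a \<circ> (\<sigma> \<circ> \<tau>)" using s(4) t(4) by (simp add: o_assoc)
    fix i assume h: "(\<sigma> \<circ> \<tau>) i \<noteq> i"
    show "a i \<in> {Down, Up}"
    proof (cases "\<sigma> i = i")
      case False then show ?thesis using s(3) by blast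
    next
      case True
      then have "\<tau> i \<noteq> i" using h by auto
      then have "b i \<in> {Down, Up}" using t(3) by blast
      then show ?thesis using s(4) True by simp
    qed
  qed
qed

lemma wsim_swap: assumes "a i = Down" "a j = Up" shows "wsim a (a(i := Up, j := Down))"
proof -
  have ij: "i \<noteq> j" using assms by auto
  define \<sigma> where "\<sigma> = (id(i := j, j := i) :: int \<Rightarrow> int)"
  have inv: "\<sigma> \<circ> \<sigma> = id" unfolding \<sigma>_def by (auto simp: fun_eq_iff)
  show ?thesis unfolding wsim_def
  proof (intro exI conjI allI impI)
    show "bij \<sigma>" using inv by (metis o_bij)
    show "finite {k. \<sigma> k \<noteq> k}" by (rule finite_subset[of _ "{i,j}"]) (auto simp: \<sigma>_def)
    fix k assume "\<sigma> k \<noteq> k"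
    then have "k = i \<or> k = j" unfolding \<sigma>_def by (auto split: if_splits)
    then show "a k \<in> {Down, Up}" using assms by auto
  next
    show "a(i := Up, j := Down) = a \<circ> \<sigma>" using assms ij unfolding \<sigma>_def by (auto simp: fun_eq_iff)
  qed
qed

lemma flip_steps:
  assumes cd: "is_cup_diagram c" and C: "C \<subseteq> cups c" and lab: "\<And>i j. (i,j) \<in> C \<Longrightarrow> m i = Down \<and> m j = Up"
  shows "bruhat_le m (flip C m) \<and> wsim m (flip C m)"
proof -
  have "finite C" using C cd_fin[OF cd] finite_subset by blast
  then show ?thesis using C lab
  proof (induction C rule: finite_induct)
    case empty
    have "flip {} m = m" unfolding flip_def by (simp add: fun_eq_iff)
    then show ?case unfolding bruhat_le_def using wsim_refl by simp
  next
    case (insert x F)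
    obtain i j where x: "x = (i,j)" by (cases x)
    have ijc: "(i,j) \<in> cups c" using insert.prems x by auto
    have ij: "i < j" using cd_lt[OF cd ijc] .
    have IH: "bruhat_le m (flip F m) \<and> wsim m (flip F m)"
      using insert.IH insert.prems by blast
    have Fc: "F \<subseteq> cups c" using insert.prems by auto
    have nfi: "i \<notin> fst ` F \<and> i \<notin> snd ` F \<and> j \<notin> fst ` F \<and> j \<notin> snd ` F"
    proof -
      have "\<And>y. y \<in> F \<Longrightarrow> {fst y, snd y} \<inter> {i,j} \<noteq> {} \<Longrightarrow> False"
      proof -
        fix y assume y: "y \<in> F" "{fst y, snd y} \<inter> {i,j} \<noteq> {}"
        have "(fst y, snd y) \<in> cups c" using y Fc by auto
        then have "fst y = i \<and> snd y = j" using cd_disj[OF cd _ ijc] y(2) by blast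
        then have "y = x" using x by (cases y) auto
        then show False using insert.hyps y by simp
      qed
      then show ?thesis by force
    qed
    have mi: "flip F m i = Down" "flip F m j = Up"
      using nfi insert.prems(2)[of i j] x unfolding flip_def by auto
    have fe: "flip (insert x F) m = (flip F m)(i := Up, j := Down)"
      using x ij nfi unfolding flip_def by (auto simp: fun_eq_iff)
    have st: "bruhat_step (flip F m) (flip (insert x F) m)"
      unfolding bruhat_step_def using ij mi fe by blast
    have "bruhat_le m (flip (insert x F) m)"
      using IH st unfolding bruhat_le_def by (meson rtranclp.rtrancl_into_rtrancl)
    moreover have "wsim m (flip (insert x F) m)"
      using wsim_trans[OF _ wsim_swap[OF mi]] IH fe by simp
    ultimately show ?case by blast
  qed
qed

lemma flip_repr:
  assumes cd: "is_cup_diagram c" and og: "oriented_cup c g"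
    and lab: "\<And>i j. (i,j) \<in> cups c \<Longrightarrow> m i = Down \<and> m j = Up"
    and ag: "\<And>x. x \<notin> endpoints (cups c) \<Longrightarrow> g x = m x"
  shows "g = flip {(i,j). (i,j) \<in> cups c \<and> g i = Up} m"
proof
  fix x
  define Cw where "Cw = {(i,j). (i,j) \<in> cups c \<and> g i = Up}"
  show "g x = flip Cw m x"
  proof (cases "x \<in> endpoints (cups c)")
    case False
    then have "x \<notin> fst ` Cw \<and> x \<notin> snd ` Cw" unfolding Cw_def endpoints_def by force
    then show ?thesis using ag[OF False] unfolding flip_def by simp
  next
    case True
    then consider y where "(x,y) \<in> cups c" | y where "(y,x) \<in> cups c" unfolding endpoints_def by force
    then show ?thesis
    proof cases
      case 1
      have xy: "x < y" using cd_lt[OF cd 1] .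
      have nsnd: "x \<notin> snd ` Cw"
      proof
        assume "x \<in> snd ` Cw"
        then obtain z where "(z,x) \<in> cups c" unfolding Cw_def by force
        then have "z = x \<and> x = y" using cd_disj[OF cd _ 1] by blast
        then show False using xy by simp
      qed
      show ?thesis
      proof (cases "g x = Up")
        case True
        then have "x \<in> fst ` Cw" unfolding Cw_def using 1 by force
        then show ?thesis unfolding flip_def using True by simp
      next
        case False
        have "x \<notin> fst ` Cw"
        proof
          assume "x \<in> fst ` Cw"
          then obtain z where "(x,z) \<in> cups c" "g x = Up" unfolding Cw_def by force
          then show False using False by simp
        qed
        moreover have "g x = Down" using or_cup[OF og 1] False by auto
        ultimately show ?thesis unfolding flip_def using nsnd lab[OF 1] by simp
      qed
    next
      case 2
      have yx: "y < x" using cd_lt[OF cd 2] .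
      have nfst: "x \<notin> fst ` Cw"
      proof
        assume "x \<in> fst ` Cw"
        then obtain z where "(x,z) \<in> cups c" unfolding Cw_def by force
        then have "x = y \<and> z = x" using cd_disj[OF cd _ 2] by blast
        then show False using yx by simp
      qed
      show ?thesis
      proof (cases "g y = Up")
        case True
        then have "x \<in> snd ` Cw" unfolding Cw_def using 2 by force
        moreover have "g x = Down" using or_cup[OF og 2] True by auto
        ultimately show ?thesis unfolding flip_def using nfst by simp
      next
        case False
        have "x \<notin> snd ` Cw"
        proof
          assume "x \<in> snd ` Cw"
          then obtain z where z: "(z,x) \<in> cups c" "g z = Up" unfolding Cw_def by force
          then have "z = y" using cd_disj[OF cd z(1) 2] by blast
          then show False using False z by simp
        qed
        moreover have "g x = Up" using or_cup[OF og 2] False by auto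
        ultimately show ?thesis unfolding flip_def using nfst lab[OF 2] by simp
      qed
    qed
  qed
qed


lemma part0: assumes wm: "weight m" and ws: "wsub m l" shows "bruhat_le m l"
proof -
  let ?c = "underline m"
  have p: "is_cup_diagram ?c" "oriented_cup ?c m" "cup_degree ?c m = 0"
    using underline_props[OF wm] by simp_all
  have ol: "oriented_cup ?c l" and wsm: "wsim m l" using ws unfolding wsub_def by auto
  have lab: "\<And>i j. (i,j) \<in> cups ?c \<Longrightarrow> m i = Down \<and> m j = Up" by (rule deg0_down[OF p])
  have ag: "\<And>x. x \<notin> endpoints (cups ?c) \<Longrightarrow> l x = m x" by (rule agree[OF p(1) p(2) ol wsm])
  have e: "l = flip {(i,j). (i,j) \<in> cups ?c \<and> l i = Up} m" using flip_repr[OF p(1) ol lab ag] .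
  have "bruhat_le m (flip {(i,j). (i,j) \<in> cups ?c \<and> l i = Up} m)"
    by (rule conjunct1[OF flip_steps[OF p(1) _ lab]]) auto
  then show ?thesis using e by simp
qed

lemma part_i: assumes wl: "weight l" and cd: "is_cup_diagram a" and ol: "oriented_cup a l"
  shows "\<exists>!\<alpha>. weight \<alpha> \<and> a = underline \<alpha> \<and> wsub \<alpha> l"
proof -
  define \<alpha> where "\<alpha> x = (if x \<in> fst ` cups a then Down else if x \<in> snd ` cups a then Up else l x)" for x
  have lab: "\<And>i j. (i,j) \<in> cups a \<Longrightarrow> \<alpha> i = Down \<and> \<alpha> j = Up"
  proof -
    fix i j assume ij: "(i,j) \<in> cups a"
    have "j \<notin> fst ` cups a"
    proof
      assume "j \<in> fst ` cups a"
      then obtain z where "(j,z) \<in> cups a" by force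
      then have "j = i \<and> z = j" using cd_disj[OF cd _ ij] by blast
      then show False using cd_lt[OF cd ij] by simp
    qed
    then show "\<alpha> i = Down \<and> \<alpha> j = Up" unfolding \<alpha>_def using ij by force
  qed
  have off: "\<And>x. x \<notin> endpoints (cups a) \<Longrightarrow> \<alpha> x = l x"
    unfolding \<alpha>_def endpoints_def by auto
  have oa: "oriented_cup a \<alpha>" unfolding oriented_cup_def
  proof (intro conjI)
    show "\<forall>i. i \<notin> endpoints (cups a) \<and> i \<notin> rays a \<longrightarrow> \<alpha> i \<in> {Circ, Cross}"
      using off or_free[OF ol] by auto
    show "\<forall>(i,j)\<in>cups a. (\<alpha> i = Down \<and> \<alpha> j = Up) \<or> (\<alpha> i = Up \<and> \<alpha> j = Down)" using lab by blast
    show "\<forall>i\<in>rays a. \<alpha> i \<in> {Down, Up}" using off cd_rend[OF cd] or_ray[OF ol] by auto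
    show "\<forall>i\<in>rays a. \<forall>j\<in>rays a. i < j \<longrightarrow> \<not> (\<alpha> i = Down \<and> \<alpha> j = Up)"
      using off cd_rend[OF cd] or_rord[OF ol] by metis
  qed
  have deg: "cup_degree a \<alpha> = 0"
  proof -
    have "{(i,j). (i,j) \<in> cups a \<and> \<alpha> i = Up} = {}" using lab by fastforce
    then show ?thesis unfolding cup_degree_def by (simp only: card.empty)
  qed
  have wa: "weight \<alpha>"
  proof -
    obtain F where F: "finite F" "\<forall>i j. i \<notin> F \<longrightarrow> j \<notin> F \<longrightarrow> i < j \<longrightarrow> \<not> (l i = Down \<and> l j = Up)"
      using wl unfolding weight_def by blast
    have fe: "finite (endpoints (cups a))" unfolding endpoints_def using cd_fin[OF cd] by auto
    show ?thesis unfolding weight_def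
      by (rule exI[of _ "F \<union> endpoints (cups a)"]) (use F fe off in auto)
  qed
  have ua: "underline \<alpha> = a" using underline_eq[OF wa] canon_unique[OF cd oa deg] by simp
  have agl: "\<And>x. x \<notin> endpoints (cups a) \<Longrightarrow> l x = \<alpha> x" using off by simp
  have "l = flip {(i,j). (i,j) \<in> cups a \<and> l i = Up} \<alpha>" using flip_repr[OF cd ol lab agl] .
  moreover have "wsim \<alpha> (flip {(i,j). (i,j) \<in> cups a \<and> l i = Up} \<alpha>)"
    by (rule conjunct2[OF flip_steps[OF cd _ lab]]) auto
  ultimately have wsa: "wsim \<alpha> l" by simp
  have P: "weight \<alpha> \<and> a = underline \<alpha> \<and> wsub \<alpha> l"
    using wa ua wsa ol unfolding wsub_def by simp
  show ?thesis
  proof (rule ex1I[of _ \<alpha>])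
    show "weight \<alpha> \<and> a = underline \<alpha> \<and> wsub \<alpha> l" by (rule P)
  next
    fix \<beta> assume b: "weight \<beta> \<and> a = underline \<beta> \<and> wsub \<beta> l"
    have pb: "is_cup_diagram a" "oriented_cup a \<beta>" "cup_degree a \<beta> = 0"
      using underline_props[of \<beta>] b by auto
    have wsb: "wsim \<beta> l" using b unfolding wsub_def by auto
    show "\<beta> = \<alpha>"
    proof
      fix x
      show "\<beta> x = \<alpha> x"
      proof (cases "x \<in> endpoints (cups a)")
        case True
        then consider y where "(x,y) \<in> cups a" | y where "(y,x) \<in> cups a" unfolding endpoints_def by force
        then show ?thesis
        proof cases
          case 1 then show ?thesis using lab[OF 1] deg0_down[OF pb 1] by simp
        next
          case 2 then show ?thesis using lab[OF 2] deg0_down[OF pb 2] by simp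
        qed
      next
        case False
        then show ?thesis using agree[OF pb(1) pb(2) ol wsb False] off[OF False] by simp
      qed
    qed
  qed
qed

lemma mirror_iff: "(b = cup_mirror u) = (cap_mirror b = u)"
  unfolding cup_mirror_def cap_mirror_def by (cases b; cases u) auto

theorem lemma2p3:
  fixes l m :: wt
  assumes "weight l" and "weight m"
  shows "(wsub m l \<longrightarrow> bruhat_le m l) \<and>
    (\<forall>a. is_cup_diagram a \<and> oriented_cup a l \<longrightarrow>
        (\<exists>!\<alpha>. weight \<alpha> \<and> a = underline \<alpha> \<and> wsub \<alpha> l)) \<and>
    (\<forall>b. is_cap_diagram b \<and> oriented_cap l b \<longrightarrow>
        (\<exists>!\<beta>. weight \<beta> \<and> b = overline \<beta> \<and> wsub \<beta> l)) \<and>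
    (\<forall>a b. is_cup_diagram a \<and> is_cap_diagram b \<and> oriented_cup a l \<and> oriented_cap l b \<longrightarrow>
        (\<exists>!p. weight (fst p) \<and> weight (snd p) \<and> a = underline (fst p) \<and> b = overline (snd p)
              \<and> wsub (fst p) l \<and> wsub (snd p) l))"
proof -
  have I: "\<And>a. is_cup_diagram a \<and> oriented_cup a l \<Longrightarrow> (\<exists>!\<alpha>. weight \<alpha> \<and> a = underline \<alpha> \<and> wsub \<alpha> l)"
    using part_i[OF assms(1)] by blast
  have II: "\<And>b. is_cap_diagram b \<and> oriented_cap l b \<Longrightarrow> (\<exists>!\<beta>. weight \<beta> \<and> b = overline \<beta> \<and> wsub \<beta> l)"
  proof -
    fix b assume "is_cap_diagram b \<and> oriented_cap l b"
    then have "\<exists>!\<beta>. weight \<beta> \<and> cap_mirror b = underline \<beta> \<and> wsub \<beta> l"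
      using part_i[OF assms(1)] unfolding is_cap_diagram_def oriented_cap_def by blast
    then show "\<exists>!\<beta>. weight \<beta> \<and> b = overline \<beta> \<and> wsub \<beta> l"
      unfolding overline_def mirror_iff .
  qed
  have III: "\<And>a b. is_cup_diagram a \<and> is_cap_diagram b \<and> oriented_cup a l \<and> oriented_cap l b \<Longrightarrow>
        (\<exists>!p. weight (fst p) \<and> weight (snd p) \<and> a = underline (fst p) \<and> b = overline (snd p)
              \<and> wsub (fst p) l \<and> wsub (snd p) l)"
  proof -
    fix a b assume h: "is_cup_diagram a \<and> is_cap_diagram b \<and> oriented_cup a l \<and> oriented_cap l b"
    obtain \<alpha> where A: "weight \<alpha> \<and> a = underline \<alpha> \<and> wsub \<alpha> l"
      and Au: "\<And>x. weight x \<and> a = underline x \<and> wsub x l \<Longrightarrow> x = \<alpha>" using I[of a] h by blast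
    obtain \<beta> where B: "weight \<beta> \<and> b = overline \<beta> \<and> wsub \<beta> l"
      and Bu: "\<And>x. weight x \<and> b = overline x \<and> wsub x l \<Longrightarrow> x = \<beta>" using II[of b] h by blast
    show "\<exists>!p. weight (fst p) \<and> weight (snd p) \<and> a = underline (fst p) \<and> b = overline (snd p)
              \<and> wsub (fst p) l \<and> wsub (snd p) l"
    proof (rule ex1I[of _ "(\<alpha>, \<beta>)"])
      show "weight (fst (\<alpha>, \<beta>)) \<and> weight (snd (\<alpha>, \<beta>)) \<and> a = underline (fst (\<alpha>, \<beta>)) \<and>
        b = overline (snd (\<alpha>, \<beta>)) \<and> wsub (fst (\<alpha>, \<beta>)) l \<and> wsub (snd (\<alpha>, \<beta>)) l" using A B by simp
    next
      fix p assume "weight (fst p) \<and> weight (snd p) \<and> a = underline (fst p) \<and> b = overline (snd p)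
              \<and> wsub (fst p) l \<and> wsub (snd p) l"
      then have "fst p = \<alpha>" "snd p = \<beta>" using Au[of "fst p"] Bu[of "snd p"] by auto
      then show "p = (\<alpha>, \<beta>)" by (simp add: prod_eq_iff)
    qed
  qed
  have P0: "wsub m l \<longrightarrow> bruhat_le m l" using part0[OF assms(2)] by blast
  show ?thesis
    apply (intro conjI)
       apply (rule P0)
      apply (intro allI impI, erule I)
     apply (intro allI impI, erule II)
    apply (intro allI impI, erule III)
    done
qed

end
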